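(* Let $d\ge1$, $N\ge1$ be integers, let $f:\{0,1\}^\ell\to\{0,1\}^{N+1}$ be $d$-local, and let $b$ satisfy $b^2\ge\frac14\big(1-(2d)^{-\ln 4}\big)$. Then for every function $g:\{0,1\}^N\to\{0,1\}$, $$\Delta\big(f(B_b^{\otimes\ell}),(X,g(X))\big)\ \ge\ \tfrac12-\tfrac1N,$$ where $X$ is uniform on $\{0,1\}^N$.
   Context: $B_b$ is the Bernoulli random variable equal to $0$ with probability $1/2+b$ and $1$ with probability $1/2-b$; $B_b^{\otimes\ell}$ denotes $\ell$ i.i.d. copies. A function is $d$-local if each output bit depends on at most $d$ input bits. $\Delta$ is total variation distance. *)

theory Defs
  imports "HOL-Probability.Probability"
begin

text \<open>Bits are booleans (True = 1). B_b is 0 w.p. 1/2+b and 1 w.p. 1/2-b.\<close>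
definition B :: "real \<Rightarrow> bool pmf" where
  "B b = bernoulli_pmf (1/2 - b)"

definition tv_dist :: "'a pmf \<Rightarrow> 'a pmf \<Rightarrow> real" where
  "tv_dist p q = (SUP A. \<bar>measure_pmf.prob p A - measure_pmf.prob q A\<bar>)"

definition local_fun :: "nat \<Rightarrow> nat \<Rightarrow> nat \<Rightarrow> (bool list \<Rightarrow> bool list) \<Rightarrow> bool" where
  "local_fun d l m f \<longleftrightarrow>
     (\<forall>xs. length xs = l \<longrightarrow> length (f xs) = m) \<and>
     (\<forall>i<m. \<exists>S. S \<subseteq> {..<l} \<and> card S \<le> d \<and>
        (\<forall>xs ys. length xs = l \<longrightarrow> length ys = l \<longrightarrow>
           (\<forall>j\<in>S. xs ! j = ys ! j) \<longrightarrow> f xs ! i = f ys ! i))"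

end

theory Submission imports Defs "HOL-Analysis.Harmonic_Numbers" begin

lemma key_real:
  fixes d :: nat and b :: real
  assumes "d \<ge> 1" "\<bar>b\<bar> \<le> 1/2" "b ^ 2 \<ge> 1/4 * (1 - (2 * real d) powr (- ln 4))"
  shows "real d * (1/2 - \<bar>b\<bar>) \<le> 1/8"
proof -
  define y where "y = (2 * real d) powr (- ln 4)"
  define D where "D = 2 * real d"
  have D1: "D \<ge> 2" using assms(1) unfolding D_def by simp
  have ln4: "ln (4::real) = 2 * ln 2"
    using ln_mult[of 2 2] by simp
  have "ln (4::real) \<ge> 4/3" using ln4 ln2_ge_two_thirds by simp
  hence y1: "y \<le> D powr (-4/3)" unfolding y_def D_def[symmetric]
    by (intro powr_mono) (use D1 in auto)
  have "D powr (-4/3) = D powr (-1/3) * D powr (-1)"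
    by (subst powr_add[symmetric]) simp
  also have "\<dots> = D powr (-1/3) / D" using D1 by (simp add: powr_minus_divide)
  finally have y2: "D powr (-4/3) = D powr (-1/3) / D" .
  have t1: "D powr (-1/3) \<le> 2 powr (-1/3)"
    by (rule powr_mono2') (use D1 in auto)
  have t2: "(2::real) powr (-1/3) \<le> 4/5"
  proof (rule ccontr)
    assume "\<not> ?thesis"
    hence "(4/5::real)^3 < (2 powr (-1/3))^3"
      by (intro power_strict_mono) auto
    also have "(2 powr (-1/3::real))^3 = 2 powr (-1/3 * 3)"
      by (simp add: powr_realpow[symmetric] powr_powr)
    also have "\<dots> = 1/2" using D1 by (simp add: powr_minus_divide)
    finally show False by (simp add: eval_nat_numeral)
  qed
  have dy: "real d * y \<le> 2/5"
  proof -
    have "real d * y \<le> real d * (D powr (-1/3) / D)"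
      using y1 y2 by (intro mult_left_mono) auto
    also have "\<dots> = D powr (-1/3) / 2" unfolding D_def using assms(1) by simp
    also have "\<dots> \<le> 2/5" using t1 t2 by simp
    finally show ?thesis .
  qed
  have ynn: "y \<ge> 0" unfolding y_def by simp
  have yle: "y \<le> 2/5"
  proof -
    have "y \<le> real d * y" using assms(1) ynn by (simp add: mult_le_cancel_right1)
    thus ?thesis using dy by simp
  qed
  define q where "q = 1/2 - \<bar>b\<bar>"
  have q0: "q \<ge> 0" "q \<le> 1/2" using assms(2) unfolding q_def by auto
  have qq: "q * (1 - q) \<le> y / 4"
  proof -
    have "q * (1 - q) = 1/4 - \<bar>b\<bar>^2" unfolding q_def by (simp add: algebra_simps power2_eq_square)
    also have "\<bar>b\<bar>^2 = b^2" by simp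
    finally show ?thesis using assms(3) unfolding y_def by simp
  qed
  have "q * (1/2) \<le> q * (1 - q)" using q0 by (intro mult_left_mono) auto
  hence q1: "q \<le> 1/5" using qq yle by simp
  have "q * (4/5) \<le> q * (1 - q)" using q0 q1 by (intro mult_left_mono) auto
  hence q2: "q \<le> 5 * y / 16" using qq by simp
  have "real d * q \<le> real d * (5 * y / 16)" using q2 by (intro mult_left_mono) auto
  also have "\<dots> = 5/16 * (real d * y)" by simp
  also have "\<dots> \<le> 1/8" using dy by (simp add: algebra_simps)
  finally show ?thesis unfolding q_def .
qed

lemma nth_replicate_pmf: "j < l \<Longrightarrow> map_pmf (\<lambda>xs. xs ! j) (replicate_pmf l p) = p"
proof (induction l arbitrary: j)
  case 0 then show ?case by simp
next
  case (Suc l)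
  show ?case
  proof (cases j)
    case 0
    then show ?thesis by (simp add: map_bind_pmf pmf.map_comp o_def map_pmf_const bind_return_pmf')
  next
    case (Suc k)
    then have "k < l" using Suc.prems by simp
    then show ?thesis using Suc Suc.IH[OF \<open>k<l\<close>, unfolded map_pmf_def]
      by (simp add: map_bind_pmf pmf.map_comp o_def bind_pmf_const)
  qed
qed


lemma tv_ge: "\<bar>measure_pmf.prob p A - measure_pmf.prob q A\<bar> \<le> tv_dist p q"
  unfolding tv_dist_def
proof (rule cSUP_upper)
  show "bdd_above (range (\<lambda>A. \<bar>measure_pmf.prob p A - measure_pmf.prob q A\<bar>))"
  proof (rule bdd_aboveI)
    fix x assume "x \<in> range (\<lambda>A. \<bar>measure_pmf.prob p A - measure_pmf.prob q A\<bar>)"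
    then obtain B where "x = \<bar>measure_pmf.prob p B - measure_pmf.prob q B\<bar>" by auto
    moreover have "measure_pmf.prob p B \<le> 1" "measure_pmf.prob q B \<le> 1"
      "measure_pmf.prob p B \<ge> 0" "measure_pmf.prob q B \<ge> 0" by auto
    ultimately show "x \<le> 1" by linarith
  qed
qed simp

theorem lemmaC1:
  fixes d N l :: nat and b :: real
    and f :: "bool list \<Rightarrow> bool list" and g :: "bool list \<Rightarrow> bool"
  assumes "d \<ge> 1" and "N \<ge> 1"
    and "local_fun d l (N + 1) f"
    and "\<bar>b\<bar> \<le> 1/2"
    and "b ^ 2 \<ge> 1/4 * (1 - (2 * real d) powr (- ln 4))"
  shows "tv_dist (map_pmf f (replicate_pmf l (B b)))
                 (map_pmf (\<lambda>xs. xs @ [g xs]) (pmf_of_set {xs :: bool list. length xs = N}))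
           \<ge> 1/2 - 1 / real N"
proof (cases "N \<ge> 3")
  case False
  hence "1/2 - 1 / real N \<le> 0" using assms(2)
    by (cases "N = 1") (auto simp: field_simps)
  moreover have "0 \<le> tv_dist (map_pmf f (replicate_pmf l (B b)))
                 (map_pmf (\<lambda>xs. xs @ [g xs]) (pmf_of_set {xs :: bool list. length xs = N}))"
    by (rule order_trans[OF _ tv_ge[where A="{}"]]) simp
  ultimately show ?thesis by linarith
next
  case True
  define R where "R = replicate_pmf l (B b)"
  define P where "P = map_pmf (\<lambda>xs. xs @ [g xs]) (pmf_of_set {xs :: bool list. length xs = N})"
  define v where "v = (b < 0)"
  define q where "q = 1/2 - \<bar>b\<bar>"
  define c where "c = f (replicate l v)"
  define E where "E = {ys. take 3 ys = take 3 c}"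
  from assms(3) have len: "\<And>xs. length xs = l \<Longrightarrow> length (f xs) = N + 1"
    unfolding local_fun_def by blast
  from assms(3) have "\<forall>i<N+1. \<exists>S. S \<subseteq> {..<l} \<and> card S \<le> d \<and>
        (\<forall>xs ys. length xs = l \<longrightarrow> length ys = l \<longrightarrow>
           (\<forall>j\<in>S. xs ! j = ys ! j) \<longrightarrow> f xs ! i = f ys ! i)"
    unfolding local_fun_def by blast
  then obtain S where S: "\<And>i. i<N+1 \<Longrightarrow> S i \<subseteq> {..<l} \<and> card (S i) \<le> d \<and>
        (\<forall>xs ys. length xs = l \<longrightarrow> length ys = l \<longrightarrow>
           (\<forall>j\<in>S i. xs ! j = ys ! j) \<longrightarrow> f xs ! i = f ys ! i)"
    by metis
  define U where "U = (\<Union>i<3. S i)"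
  have U_sub: "U \<subseteq> {..<l}" unfolding U_def
  proof (rule UN_least)
    fix i :: nat assume "i \<in> {..<3}" thus "S i \<subseteq> {..<l}" using S[of i] True by auto
  qed
  hence finU: "finite U" by (rule finite_subset) simp
  have cardU: "card U \<le> 3 * d"
  proof -
    have "card U \<le> (\<Sum>i<3. card (S i))" unfolding U_def by (rule card_UN_le) simp
    also have "\<dots> \<le> (\<Sum>i<(3::nat). d)" by (rule sum_mono) (use S True in force)
    finally show ?thesis by simp
  qed
  have lenc: "length c = N + 1" unfolding c_def by (rule len) simp
  have bern: "measure_pmf.prob (B b) {x. x \<noteq> v} = q"
  proof -
    have "{x. x \<noteq> v} = {\<not> v}" by auto
    hence "measure_pmf.prob (B b) {x. x \<noteq> v} = pmf (B b) (\<not> v)" by (simp add: measure_pmf_single)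
    also have "\<dots> = q"
    proof (cases "b < 0")
      case True
      have "0 \<le> 1/2 - b" "1/2 - b \<le> 1" using assms(4) by auto
      thus ?thesis using True unfolding B_def q_def v_def by (simp add: pmf_bernoulli_False)
    next
      case False
      have "0 \<le> 1/2 - b" "1/2 - b \<le> 1" using assms(4) by auto
      thus ?thesis using False unfolding B_def q_def v_def by (simp add: pmf_bernoulli_True)
    qed
    finally show ?thesis .
  qed
  have coord: "j \<in> U \<Longrightarrow> measure_pmf.prob R {xs. xs ! j \<noteq> v} = q" for j
  proof -
    assume "j \<in> U" hence "j < l" using U_sub by auto
    have "measure_pmf.prob R {xs. xs ! j \<noteq> v} = measure_pmf.prob (map_pmf (\<lambda>xs. xs ! j) R) {x. x \<noteq> v}"
      by (simp add: vimage_def)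
    also have "\<dots> = q" unfolding R_def nth_replicate_pmf[OF \<open>j<l\<close>] by (rule bern)
    finally show ?thesis .
  qed
  define G where "G = {xs. \<forall>j\<in>U. xs ! j = v}"
  have G_eq: "G = space (measure_pmf R) - (\<Union>j\<in>U. {xs. xs ! j \<noteq> v})" unfolding G_def by auto
  have "measure_pmf.prob R (\<Union>j\<in>U. {xs. xs ! j \<noteq> v}) \<le> (\<Sum>j\<in>U. measure_pmf.prob R {xs. xs ! j \<noteq> v})"
    by (rule measure_pmf.finite_measure_subadditive_finite) (use finU in auto)
  also have "\<dots> = real (card U) * q" using coord by simp
  finally have "measure_pmf.prob R G \<ge> 1 - real (card U) * q"
    unfolding G_eq by (subst measure_pmf.prob_compl) auto
  moreover have "real (card U) * q \<le> 3 * (real d * q)"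
  proof -
    have "q \<ge> 0" unfolding q_def using assms(4) by simp
    hence "real (card U) * q \<le> real (3 * d) * q" using cardU
      by (intro mult_right_mono) auto
    thus ?thesis by simp
  qed
  moreover have "real d * q \<le> 1/8" unfolding q_def by (rule key_real[OF assms(1) assms(4) assms(5)])
  ultimately have PG: "measure_pmf.prob R G \<ge> 5/8" by linarith
  have "G \<inter> set_pmf R \<subseteq> f -` E \<inter> set_pmf R"
  proof
    fix xs assume xs: "xs \<in> G \<inter> set_pmf R"
    hence lxs: "length xs = l" unfolding R_def by (simp add: set_replicate_pmf)
    have "f xs ! i = c ! i" if "i < 3" for i
    proof -
      have "i < N + 1" using that True by simp
      moreover have "\<forall>j\<in>S i. xs ! j = replicate l v ! j"
      proof
        fix j assume "j \<in> S i"
        hence "j \<in> U" "j < l" unfolding U_def using that S[OF \<open>i<N+1\<close>] by auto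
        thus "xs ! j = replicate l v ! j" using xs unfolding G_def by simp
      qed
      ultimately show ?thesis unfolding c_def using S lxs length_replicate[of l v] by blast
    qed
    hence "take 3 (f xs) = take 3 c" using len[OF lxs] lenc True
      by (intro nth_equalityI) auto
    thus "xs \<in> f -` E \<inter> set_pmf R" using xs unfolding E_def by simp
  qed
  hence "measure_pmf.prob R (G \<inter> set_pmf R) \<le> measure_pmf.prob R (f -` E \<inter> set_pmf R)"
    by (intro measure_pmf.finite_measure_mono) auto
  hence Pf: "measure_pmf.prob (map_pmf f R) E \<ge> 5/8"
    using PG by (simp add: measure_Int_set_pmf)
  define L where "L = {xs :: bool list. length xs = N}"
  define w where "w = take 3 c"
  have lw: "length w = 3" unfolding w_def using lenc True by simp
  have finL: "finite L" unfolding L_def using finite_lists_length_eq[of "UNIV :: bool set" N] by simp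
  have cardL': "card {xs :: bool list. length xs = n} = 2 ^ n" for n
    using card_lists_length_eq[of "UNIV :: bool set" n] by simp
  have L_ne: "L \<noteq> {}" unfolding L_def by (auto intro: exI[of _ "replicate N True"])
  have set_eq: "L \<inter> (\<lambda>xs. xs @ [g xs]) -` E = (\<lambda>ys. w @ ys) ` {ys. length ys = N - 3}"
  proof (intro equalityI subsetI)
    fix xs assume "xs \<in> L \<inter> (\<lambda>xs. xs @ [g xs]) -` E"
    hence "length xs = N" "take 3 xs = w" unfolding L_def E_def w_def using True by auto
    thus "xs \<in> (\<lambda>ys. w @ ys) ` {ys. length ys = N - 3}"
      by (intro image_eqI[of _ _ "drop 3 xs"]) (metis append_take_drop_id, simp)
  next
    fix xs assume "xs \<in> (\<lambda>ys. w @ ys) ` {ys. length ys = N - 3}"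
    then obtain ys where "xs = w @ ys" "length ys = N - 3" by auto
    thus "xs \<in> L \<inter> (\<lambda>xs. xs @ [g xs]) -` E" unfolding L_def E_def w_def[symmetric]
      using lw True by auto
  qed
  have "measure_pmf.prob P E = real (card (L \<inter> (\<lambda>xs. xs @ [g xs]) -` E)) / real (card L)"
    unfolding P_def L_def[symmetric] by (simp add: measure_pmf_of_set[OF L_ne finL])
  also have "card (L \<inter> (\<lambda>xs. xs @ [g xs]) -` E) = 2 ^ (N - 3)"
    unfolding set_eq by (subst card_image) (auto simp: inj_on_def cardL')
  also have "card L = 2 ^ (N - 3) * 8"
  proof -
    have "N = (N - 3) + 3" using True by simp
    hence "card L = 2 ^ ((N - 3) + 3)" unfolding L_def using cardL' by metis
    thus ?thesis by (simp add: power_add)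
  qed
  finally have PU: "measure_pmf.prob P E = 1/8" by simp
  have "5/8 - 1/8 \<le> \<bar>measure_pmf.prob (map_pmf f R) E - measure_pmf.prob P E\<bar>"
    using Pf PU by linarith
  also have "\<dots> \<le> tv_dist (map_pmf f R) P" by (rule tv_ge)
  finally have "tv_dist (map_pmf f R) P \<ge> 1/2" by simp
  moreover have "1/2 - 1 / real N \<le> 1/2" by simp
  ultimately show ?thesis unfolding R_def P_def by linarith
qed

end
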